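(* Let $X_8=E_8/K_8$ be a semi-equivelar toroidal map of type $[3^1,12^2]$, and let $X_8^\#=E_8^\#/K_8$ be its associated equivelar map of type $[3^6]$. Then for every positive integer $m_8$, $X_8^\#$ has exactly $m_8$ edge orbits if and only if $X_8$ has exactly $2m_8$ edge orbits.
   Context: $E_8$ is the semi-equivelar tiling of the plane of type $[3^1,12^2]$ (each vertex surrounded by one triangle and two regular 12-gons). $K_8$ is a discrete subgroup of ${\rm Aut}(E_8)$ acting without fixed points and consisting of translations, with rank-2 translation lattice, so that $X_8=E_8/K_8$ is a map on the torus. The associated equivelar tiling $E_8^\#$ is the tiling of type $[3^6]$ whose vertices are the centres of the 12-gons of $E_8$, two centres joined when at minimal distance; $X_8^\#:=E_8^\#/K_8$. Edge orbits of a map are the orbits of its automorphism group on its set of edges. *)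

theory Defs
  imports Complex_Main
begin

text \<open>The 12-gons of E_8 are regular with circumradius 1; their centres form the
  triangular lattice Lam generated by dd and dd*omega, where dd = 2 cos(pi/12)
  is the distance between centres of adjacent 12-gons (sharing an edge).
  The 12-gon with centre c has vertices c + cis((2k+1) pi/12), k = 0..11.
  The triangles of E_8 fill the remaining holes; every edge of E_8 is a side of
  some 12-gon.\<close>

definition omega6 :: complex where
  "omega6 = cis (pi / 3)"

definition dd :: real where
  "dd = 2 * cos (pi / 12)"

text \<open>Centres of the 12-gons of E_8 = vertex set of E_8^#.\<close>
definition Lam :: "complex set" where
  "Lam = {complex_of_real dd * (of_int a + of_int b * omega6) | a b :: int. True}"

definition V8 :: "complex set" where
  "V8 = {c + cis ((2 * real k + 1) * pi / 12) | c k. c \<in> Lam \<and> k < 12}"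

definition Edges8 :: "complex set set" where
  "Edges8 = {{c + cis ((2 * real k + 1) * pi / 12), c + cis ((2 * real k + 3) * pi / 12)}
              | c k. c \<in> Lam \<and> k < 12}"

definition EdgesS :: "complex set set" where
  "EdgesS = {{x, y} | x y. x \<in> Lam \<and> y \<in> Lam \<and> dist x y = dd}"

text \<open>Automorphism group of a tiling of the plane with vertex set P: the isometries
  of the plane preserving the tiling (equivalently its vertex set).\<close>
definition isometry :: "(complex \<Rightarrow> complex) \<Rightarrow> bool" where
  "isometry g \<longleftrightarrow> (\<forall>z w. dist (g z) (g w) = dist z w)"

definition AutT :: "complex set \<Rightarrow> (complex \<Rightarrow> complex) set" where
  "AutT P = {g. isometry g \<and> g ` P = P}"

definition Aut8 :: "(complex \<Rightarrow> complex) set" where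
  "Aut8 = AutT V8"

definition AutS :: "(complex \<Rightarrow> complex) set" where
  "AutS = AutT Lam"

definition normaliser :: "(complex \<Rightarrow> complex) set \<Rightarrow> (complex \<Rightarrow> complex) set
    \<Rightarrow> (complex \<Rightarrow> complex) set" where
  "normaliser G K = {g \<in> G. (\<lambda>k. g \<circ> k) ` K = (\<lambda>k. k \<circ> g) ` K}"

definition translation_lattice_group :: "(complex \<Rightarrow> complex) set \<Rightarrow> (complex \<Rightarrow> complex) set \<Rightarrow> bool" where
  "translation_lattice_group G K \<longleftrightarrow>
     K \<subseteq> G \<and> id \<in> K \<and>
     (\<forall>k\<in>K. \<exists>w. k = (\<lambda>z. z + w)) \<and>
     (\<forall>k1\<in>K. \<forall>k2\<in>K. k1 \<circ> k2 \<in> K) \<and>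
     (\<forall>w. (\<lambda>z. z + w) \<in> K \<longrightarrow> (\<lambda>z. z - w) \<in> K) \<and>
     (\<exists>e>0. \<forall>w. (\<lambda>z. z + w) \<in> K \<and> w \<noteq> 0 \<longrightarrow> e \<le> norm w) \<and>
     (\<exists>a b. (\<lambda>z. z + a) \<in> K \<and> (\<lambda>z. z + b) \<in> K \<and> Im (a * cnj b) \<noteq> 0)"

text \<open>Aut(E/K) = N_G(K)/K; since K \<subseteq> N_G(K), the orbits of
  Aut(E/K) on the edges of E/K (= K-orbits of edges of E) correspond bijectively to
  the orbits of N_G(K) on the edges of E.\<close>
definition edge_orbits :: "(complex \<Rightarrow> complex) set \<Rightarrow> complex set set
    \<Rightarrow> (complex \<Rightarrow> complex) set \<Rightarrow> complex set set set" where
  "edge_orbits G Ed K = (\<lambda>e. (\<lambda>g. g ` e) ` normaliser G K) ` Ed"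

definition num_edge_orbits_quotient :: "(complex \<Rightarrow> complex) set \<Rightarrow> complex set set
    \<Rightarrow> (complex \<Rightarrow> complex) set \<Rightarrow> nat" where
  "num_edge_orbits_quotient G Ed K = card (edge_orbits G Ed K)"

end

theory Submission
  imports Defs "HOL-Analysis.Cartesian_Space"
begin

definition z12 :: "int \<Rightarrow> complex" where
  "z12 n = cis (real_of_int n * pi / 12)"

lemma z12_mult: "z12 a * z12 b = z12 (a + b)"
  unfolding z12_def cis_mult by (simp add: add_divide_distrib distrib_right)

lemma z12_cnj: "cnj (z12 a) = z12 (- a)"
  unfolding z12_def cis_cnj by simp

lemma z12_norm [simp]: "cmod (z12 a) = 1"
  unfolding z12_def by simp

lemma z12_0 [simp]: "z12 0 = 1"
  unfolding z12_def by simp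

lemma z12_12: "z12 12 = -1"
  unfolding z12_def by simp

lemma z12_24: "z12 24 = 1"
proof -
  have "real_of_int 24 * pi / 12 = 2 * pi * real_of_int 1" by simp
  then show ?thesis unfolding z12_def by (simp only:) (rule cis_multiple_2pi, simp)
qed

lemma z12_mod: "z12 (a mod 24) = z12 a"
proof -
  have "z12 a = z12 (a mod 24 + 24 * (a div 24))" by simp
  also have "\<dots> = z12 (a mod 24) * z12 (24 * (a div 24))" by (simp add: z12_mult)
  also have "z12 (24 * (a div 24)) = 1"
  proof -
    have "real_of_int (24 * (a div 24)) * pi / 12 = 2 * pi * real_of_int (a div 24)" by simp
    then show ?thesis unfolding z12_def by (metis cis_multiple_2pi Ints_of_int)
  qed
  finally show ?thesis by simp
qed

lemma z12_cong: "a mod 24 = b mod 24 \<Longrightarrow> z12 a = z12 b"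
  by (metis z12_mod)

lemma z12_eq_1: "z12 a = 1 \<Longrightarrow> a mod 24 = 0"
proof -
  assume "z12 a = 1"
  then have "cos (real_of_int a * pi / 12) = 1" unfolding z12_def
    by (metis cis.sel(1) one_complex.sel(1))
  then obtain n :: int where "real_of_int a * pi / 12 = n * 2 * pi" by (auto simp: cos_one_2pi_int)
  then have "real_of_int a = real_of_int (24 * n)" by (simp add: field_simps)
  then have "a = 24 * n" by linarith
  then show ?thesis by simp
qed

lemma z12_inj: "z12 a = z12 b \<Longrightarrow> a mod 24 = b mod 24"
proof -
  assume "z12 a = z12 b"
  then have "z12 (a - b) = 1"
    by (metis z12_mult z12_cnj complex_norm_square z12_norm mult.commute diff_conv_add_uminus
        complex_cnj_one power_one of_real_1)
  then have "(a - b) mod 24 = 0" by (rule z12_eq_1)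
  then show ?thesis by (simp add: mod_eq_dvd_iff dvd_eq_mod_eq_0)
qed

lemma z12_4: "z12 4 = Complex (1/2) (sqrt 3 / 2)"
proof -
  have "real_of_int 4 * pi / 12 = pi / 3" by simp
  then show ?thesis unfolding z12_def by (simp add: cis.ctr cos_60 sin_60)
qed

lemma omega6_z12: "omega6 = z12 4"
proof -
  have "real_of_int 4 * pi / 12 = pi / 3" by simp
  then show ?thesis unfolding z12_def omega6_def by simp
qed

lemma z12_8: "z12 8 = z12 4 - 1"
proof -
  have "z12 8 = z12 4 * z12 4" by (simp add: z12_mult)
  also have "\<dots> = z12 4 - 1" unfolding z12_4
    by (simp add: complex_eq_iff field_simps)
  finally show ?thesis .
qed

lemma z12_m4: "z12 (-4) = 1 - z12 4"
  unfolding z12_cnj[symmetric] z12_4 by (simp add: complex_eq_iff)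

lemma z12_add12: "z12 (a + 12) = - z12 a"
  by (metis z12_mult z12_12 mult_minus1_right)

lemma dd_complex: "complex_of_real dd = z12 1 + z12 (-1)"
  unfolding dd_def z12_def by (simp add: complex_eq_iff cis.ctr)

lemma cos12_sq: "(cos (pi/12))^2 = (2 + sqrt 3) / 4"
proof -
  have "cos (pi/6) = cos (2 * (pi/12))" by simp
  also have "\<dots> = 2 * (cos (pi/12))^2 - 1" by (rule cos_double_cos)
  finally show ?thesis by (simp add: cos_30)
qed

lemma dd_sq: "dd^2 = 2 + sqrt 3"
  unfolding dd_def using cos12_sq by (simp add: power_mult_distrib)

lemma dd_pos: "dd > 0"
proof -
  have "cos (pi/12) > 0" by (rule cos_gt_zero) (use pi_gt_zero in auto)
  then show ?thesis unfolding dd_def by simp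
qed

lemma sqrt3_bounds: "17/10 < sqrt 3" "sqrt 3 < 7/4"
proof -
  have "sqrt ((17/10)^2) < sqrt 3" by (subst real_sqrt_less_iff) (simp add: power2_eq_square)
  then show "17/10 < sqrt 3" by simp
  have "sqrt 3 < sqrt ((7/4)^2)" by (subst real_sqrt_less_iff) (simp add: power2_eq_square)
  then show "sqrt 3 < 7/4" by simp
qed

lemma dd_ge: "dd \<ge> 19/10"
proof (rule ccontr)
  assume "\<not> dd \<ge> 19/10"
  then have "dd^2 < (19/10)^2" using dd_pos by (intro power_strict_mono) auto
  then show False using dd_sq sqrt3_bounds by (simp add: power2_eq_square)
qed

lemma Lam_iff: "x \<in> Lam \<longleftrightarrow> (\<exists>a b :: int. x = complex_of_real dd * (of_int a + of_int b * z12 4))"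
  unfolding Lam_def omega6_z12 by auto

lemma Lam_0 [simp]: "0 \<in> Lam"
  unfolding Lam_iff by (rule exI[of _ 0], rule exI[of _ 0]) simp

lemma Lam_dd [simp]: "complex_of_real dd \<in> Lam"
  unfolding Lam_iff by (rule exI[of _ 1], rule exI[of _ 0]) simp

lemma Lam_add: "x \<in> Lam \<Longrightarrow> y \<in> Lam \<Longrightarrow> x + y \<in> Lam"
proof -
  assume "x \<in> Lam" "y \<in> Lam"
  then obtain a b c d :: int where "x = complex_of_real dd * (of_int a + of_int b * z12 4)"
    "y = complex_of_real dd * (of_int c + of_int d * z12 4)" unfolding Lam_iff by blast
  then show ?thesis unfolding Lam_iff
    by (intro exI[of _ "a + c"] exI[of _ "b + d"]) (simp add: algebra_simps)
qed

lemma Lam_uminus: "x \<in> Lam \<Longrightarrow> - x \<in> Lam"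
proof -
  assume "x \<in> Lam"
  then obtain a b :: int where "x = complex_of_real dd * (of_int a + of_int b * z12 4)"
    unfolding Lam_iff by blast
  then show ?thesis unfolding Lam_iff
    by (intro exI[of _ "- a"] exI[of _ "- b"]) (simp add: algebra_simps)
qed

lemma Lam_diff: "x \<in> Lam \<Longrightarrow> y \<in> Lam \<Longrightarrow> x - y \<in> Lam"
  using Lam_add[OF _ Lam_uminus] by (metis diff_conv_add_uminus)

lemma Lam_rot4: "x \<in> Lam \<Longrightarrow> z12 4 * x \<in> Lam"
proof -
  assume "x \<in> Lam"
  then obtain a b :: int where x: "x = complex_of_real dd * (of_int a + of_int b * z12 4)"
    unfolding Lam_iff by blast
  have "z12 4 * x = complex_of_real dd * (of_int (- b) + of_int (a + b) * z12 4)"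
    unfolding x of_int_add of_int_minus using z12_8 z12_mult[of 4 4, simplified] by algebra
  then show ?thesis unfolding Lam_iff by blast
qed

lemma Lam_rotm4: "x \<in> Lam \<Longrightarrow> z12 (-4) * x \<in> Lam"
proof -
  assume "x \<in> Lam"
  then obtain a b :: int where x: "x = complex_of_real dd * (of_int a + of_int b * z12 4)"
    unfolding Lam_iff by blast
  have "z12 (-4) * x = complex_of_real dd * (of_int (a + b) + of_int (- a) * z12 4)"
    unfolding x z12_m4 of_int_add of_int_minus using z12_8 z12_mult[of 4 4, simplified] by algebra
  then show ?thesis unfolding Lam_iff by blast
qed

lemma Lam_rot: "x \<in> Lam \<Longrightarrow> z12 (4 * r) * x \<in> Lam"
proof (induction r arbitrary: x rule: int_induct[where k = 0])
  case base then show ?case by simp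
next
  case (step1 i)
  have e: "z12 (4 * (i + 1)) * x = z12 (4 * i) * (z12 4 * x)"
    by (simp add: z12_mult[symmetric] algebra_simps)
  show ?case unfolding e using step1.IH Lam_rot4 step1.prems by blast
next
  case (step2 i)
  have e: "z12 (4 * (i - 1)) * x = z12 (4 * i) * (z12 (-4) * x)"
    by (simp only: mult.assoc[symmetric] z12_mult) (simp add: algebra_simps)
  show ?case unfolding e using step2.IH Lam_rotm4 step2.prems by blast
qed

lemma Lam_cnj: "x \<in> Lam \<Longrightarrow> cnj x \<in> Lam"
proof -
  assume "x \<in> Lam"
  then obtain a b :: int where x: "x = complex_of_real dd * (of_int a + of_int b * z12 4)"
    unfolding Lam_iff by blast
  have "cnj x = complex_of_real dd * (of_int (a + b) + of_int (- b) * z12 4)"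
    unfolding x using z12_m4 z12_cnj[of 4] by (simp add: algebra_simps) algebra
  then show ?thesis unfolding Lam_iff by blast
qed

lemma norm_ab: "(cmod (of_int a + of_int b * z12 4))^2 = of_int (a^2 + a*b + b^2)"
  unfolding z12_4 cmod_power2 by (simp add: power2_eq_square algebra_simps)

lemma ab_pos: "(a::int) \<noteq> 0 \<or> b \<noteq> 0 \<Longrightarrow> a^2 + a*b + b^2 \<ge> 1"
proof -
  assume "a \<noteq> 0 \<or> b \<noteq> 0"
  have "4 * (a^2 + a*b + b^2) = (2*a+b)^2 + 3 * b^2" by (simp add: power2_eq_square algebra_simps)
  moreover have "(2*a+b)^2 + 3 * b^2 > 0"
    using \<open>a \<noteq> 0 \<or> b \<noteq> 0\<close> by (cases "b = 0") (simp_all add: add_nonneg_pos)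
  ultimately have "a^2 + a*b + b^2 > 0" by (smt (verit))
  then show ?thesis by simp
qed

lemma Lam_norm_ge: "x \<in> Lam \<Longrightarrow> x \<noteq> 0 \<Longrightarrow> cmod x \<ge> dd"
proof -
  assume "x \<in> Lam" "x \<noteq> 0"
  then obtain a b :: int where x: "x = complex_of_real dd * (of_int a + of_int b * z12 4)"
    unfolding Lam_iff by blast
  then have "a \<noteq> 0 \<or> b \<noteq> 0" using \<open>x \<noteq> 0\<close> by auto
  then have "(cmod (of_int a + of_int b * z12 4))^2 \<ge> 1" unfolding norm_ab using ab_pos
    by (metis of_int_1 of_int_le_iff)
  then have "cmod (of_int a + of_int b * z12 4) \<ge> 1"
    by (metis abs_norm_cancel one_le_power real_sqrt_ge_one real_sqrt_abs power2_eq_square abs_le_square_iff abs_one)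
  then show ?thesis unfolding x norm_mult using dd_pos by simp
qed

lemma ab_one: "(a::int)^2 + a*b + b^2 = 1 \<Longrightarrow>
   (a,b) \<in> {(1,0),(0,1),(-1,1),(-1,0),(0,-1),(1,-1)}"
proof -
  assume h: "a^2 + a*b + b^2 = 1"
  have "4 = (2*a+b)^2 + 3 * b^2" using h by (simp add: power2_eq_square algebra_simps)
  moreover have "(2*a+b)^2 \<ge> 0" by simp
  ultimately have "b^2 \<le> 1" by linarith
  then have "\<bar>b\<bar> \<le> 1" by (simp add: abs_square_le_1)
  then have b: "b \<in> {-1,0,1}" by auto
  have "4 = (2*b+a)^2 + 3 * a^2" using h by (simp add: power2_eq_square algebra_simps)
  moreover have "(2*b+a)^2 \<ge> 0" by simp
  ultimately have "a^2 \<le> 1" by linarith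
  then have "\<bar>a\<bar> \<le> 1" by (simp add: abs_square_le_1)
  then have a: "a \<in> {-1,0,1}" by auto
  from a b h show ?thesis by auto
qed

lemma Lam_norm_dd: "x \<in> Lam \<Longrightarrow> cmod x = dd \<Longrightarrow> \<exists>r. x = complex_of_real dd * z12 (4 * r)"
proof -
  assume "x \<in> Lam" "cmod x = dd"
  then obtain a b :: int where x: "x = complex_of_real dd * (of_int a + of_int b * z12 4)"
    unfolding Lam_iff by blast
  then have "cmod (of_int a + of_int b * z12 4) = 1" using \<open>cmod x = dd\<close> dd_pos
    by (simp add: norm_mult)
  then have "a^2 + a*b + b^2 = 1" using norm_ab[of a b] by (metis of_int_eq_1_iff power_one)
  then have ab: "(a,b) \<in> {(1,0),(0,1),(-1,1),(-1,0),(0,-1),(1,-1)}" by (rule ab_one)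
  have e16: "z12 16 = - z12 4" using z12_add12[of 4] by simp
  have e20: "z12 20 = 1 - z12 4" using z12_add12[of 8] z12_8 by simp
  have e12: "z12 12 = -1" by (rule z12_12)
  from ab have "\<exists>r. of_int a + of_int b * z12 4 = z12 (4 * r)"
  proof (elim insertE)
    assume "(a,b) = (1,0)" then show ?thesis by (intro exI[of _ 0]) simp
  next
    assume "(a,b) = (0,1)" then show ?thesis by (intro exI[of _ 1]) simp
  next
    assume "(a,b) = (-1,1)" then show ?thesis using z12_8 by (intro exI[of _ 2]) simp
  next
    assume "(a,b) = (-1,0)" then show ?thesis using e12 by (intro exI[of _ 3]) simp
  next
    assume "(a,b) = (0,-1)" then show ?thesis using e16 by (intro exI[of _ 4]) simp
  next
    assume "(a,b) = (1,-1)" then show ?thesis using e20 by (intro exI[of _ 5]) simp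
  qed simp
  then show ?thesis unfolding x by auto
qed

lemma isometry_affine:
  assumes "isometry g"
  shows "\<exists>\<alpha> \<beta>. cmod \<alpha> = 1 \<and> (g = (\<lambda>z. \<alpha> * z + \<beta>) \<or> g = (\<lambda>z. \<alpha> * cnj z + \<beta>))"
proof -
  define f where "f z = g z - g 0" for z
  have d: "dist (f x) (f y) = dist x y" for x y
    using assms unfolding isometry_def f_def by (simp add: dist_norm)
  have f0: "f 0 = 0" unfolding f_def by simp
  have lin: "linear f" by (rule isometry_linear) (use f0 d in auto)
  define p where "p = f 1"
  define q where "q = f \<i>"
  have np: "cmod p = 1" using d[of 1 0] f0 unfolding p_def by (simp add: dist_norm)
  have nq: "cmod q = 1" using d[of "\<i>" 0] f0 unfolding q_def by (simp add: dist_norm)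
  have npq: "cmod (p - q) = cmod (1 - \<i>)" using d[of 1 "\<i>"] unfolding p_def q_def by (simp add: dist_norm)
  have n1i: "(cmod (1 - \<i>))^2 = 2" by (simp add: cmod_power2)
  define u where "u = q * cnj p"
  have pcp: "p * cnj p = 1" using np by (metis complex_norm_square mult.commute of_real_1 power_one)
  have qu: "q = u * p" unfolding u_def using pcp by (metis mult.assoc mult.commute mult_1_right)
  have nu: "cmod u = 1" unfolding u_def using np nq by (simp add: norm_mult)
  have "cmod (p - q) = cmod (1 - u)" unfolding qu using np
    by (metis mult.commute mult_1_right norm_mult right_diff_distrib)
  then have h1: "(Re (1 - u))^2 + (Im (1 - u))^2 = 2" using npq n1i by (simp add: cmod_power2)
  have h2: "(Re u)^2 + (Im u)^2 = 1" using nu by (metis cmod_power2 power_one)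
  from h1 h2 have reu: "Re u = 0" by (simp add: power2_eq_square algebra_simps)
  with h2 have "(Im u)^2 = 1" by simp
  then have "Im u = 1 \<or> Im u = -1" by (metis power2_eq_1_iff)
  then have u: "u = \<i> \<or> u = - \<i>" using reu by (auto simp: complex_eq_iff)
  have fz: "f z = of_real (Re z) * p + of_real (Im z) * q" for z
  proof -
    have "z = of_real (Re z) * 1 + of_real (Im z) * \<i>" by (simp add: complex_eq_iff)
    then have "f z = f (of_real (Re z) * 1) + f (of_real (Im z) * \<i>)"
      using linear_add[OF lin] by metis
    also have "\<dots> = of_real (Re z) * p + of_real (Im z) * q"
      unfolding p_def q_def using linear_scale[OF lin, of "Re z" 1] linear_scale[OF lin, of "Im z" "\<i>"]
      by (simp add: scaleR_conv_of_real)
    finally show ?thesis .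
  qed
  have gz: "g z = f z + g 0" for z unfolding f_def by simp
  have zz: "z = of_real (Re z) + \<i> * of_real (Im z)" for z by (simp add: complex_eq_iff)
  have cz: "cnj z = of_real (Re z) - \<i> * of_real (Im z)" for z by (simp add: complex_eq_iff)
  from u show ?thesis
  proof
    assume "u = \<i>"
    have "g z = p * z + g 0" for z
    proof -
      have "p * z = p * (of_real (Re z) + \<i> * of_real (Im z))" using zz[of z] by simp
      moreover have "g z = of_real (Re z) * p + of_real (Im z) * (\<i> * p) + g 0"
        using gz[of z] fz[of z] qu \<open>u = \<i>\<close> by simp
      ultimately show ?thesis by algebra
    qed
    then show ?thesis using np by blast
  next
    assume "u = - \<i>"
    have "g z = p * cnj z + g 0" for z
    proof -
      have "p * cnj z = p * (of_real (Re z) - \<i> * of_real (Im z))" using cz[of z] by simp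
      moreover have "g z = of_real (Re z) * p + of_real (Im z) * (- \<i> * p) + g 0"
        using gz[of z] fz[of z] qu \<open>u = - \<i>\<close> by simp
      ultimately show ?thesis by algebra
    qed
    then show ?thesis using np by blast
  qed
qed

definition lin :: "bool \<Rightarrow> int \<Rightarrow> complex \<Rightarrow> complex" where
  "lin s r z = z12 (4 * r) * (if s then cnj z else z)"

definition gf :: "bool \<Rightarrow> int \<Rightarrow> complex \<Rightarrow> complex \<Rightarrow> complex" where
  "gf s r b z = lin s r z + b"

definition Gs :: "(complex \<Rightarrow> complex) set" where
  "Gs = {gf s r b | s r b. b \<in> Lam}"

lemma lin_add: "lin s r (x + y) = lin s r x + lin s r y"
  unfolding lin_def by (simp add: algebra_simps)

lemma lin_uminus: "lin s r (- x) = - lin s r x"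
  unfolding lin_def by simp

lemma lin_diff: "lin s r (x - y) = lin s r x - lin s r y"
  unfolding lin_def by (simp add: algebra_simps)

lemma lin_norm [simp]: "cmod (lin s r z) = cmod z"
  unfolding lin_def by (simp add: norm_mult)

lemma lin_Lam: "x \<in> Lam \<Longrightarrow> lin s r x \<in> Lam"
  unfolding lin_def using Lam_rot Lam_cnj by auto

lemma lin_comp: "lin s r (lin s' r' z) = lin (s \<noteq> s') (if s then r - r' else r + r') z"
  unfolding lin_def by (cases s; cases s') (simp_all add: z12_mult z12_cnj algebra_simps)

lemma lin_id [simp]: "lin False 0 z = z"
  unfolding lin_def by simp

definition rinv :: "bool \<Rightarrow> int \<Rightarrow> int" where
  "rinv s r = (if s then r else - r)"

lemma lin_inv1: "lin s r (lin s (rinv s r) z) = z"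
  unfolding lin_comp rinv_def by (cases s) simp_all

lemma lin_inv2: "lin s (rinv s r) (lin s r z) = z"
  unfolding lin_comp rinv_def by (cases s) simp_all

lemma lin_dd: "lin s r (complex_of_real dd) = complex_of_real dd * z12 (4 * r)"
  unfolding lin_def by simp

lemma lin_z12: "lin s r (z12 a) = z12 (if s then 4 * r - a else 4 * r + a)"
  unfolding lin_def by (simp add: z12_mult z12_cnj algebra_simps)

lemma lin_plus3: "lin s (r + 3) z = - lin s r z"
proof -
  have "z12 (4 * (r + 3)) = - z12 (4 * r)" using z12_add12[of "4 * r"] by (simp add: algebra_simps)
  then show ?thesis unfolding lin_def by simp
qed

lemma lin_minus3: "lin s (r - 3) z = - lin s r z"
  using lin_plus3[of s "r - 3" z] by simp

lemma z12_shift: "z12 (a + 24 * m) = z12 a"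
  by (rule z12_cong) simp

lemma lin_cong: "r mod 6 = r' mod 6 \<Longrightarrow> lin s r = lin s r'"
proof -
  assume h: "r mod 6 = r' mod 6"
  have "r = r' + 6 * ((r - r') div 6)" using h
    by (metis add.commute diff_add_cancel mod_eq_dvd_iff dvd_mult_div_cancel)
  then have "4 * r = 4 * r' + 24 * ((r - r') div 6)" by linarith
  then have "z12 (4 * r) = z12 (4 * r')" using z12_shift by metis
  then show ?thesis unfolding lin_def by (simp add: fun_eq_iff)
qed

lemma V8_iff: "x \<in> V8 \<longleftrightarrow> (\<exists>c j. c \<in> Lam \<and> x = c + z12 (2 * j + 1))"
proof
  assume "x \<in> V8"
  then obtain c k where "c \<in> Lam" "k < (12::nat)" "x = c + cis ((2 * real k + 1) * pi / 12)"
    unfolding V8_def by blast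
  moreover have "cis ((2 * real k + 1) * pi / 12) = z12 (2 * int k + 1)" unfolding z12_def by simp
  ultimately show "\<exists>c j. c \<in> Lam \<and> x = c + z12 (2 * j + 1)" by metis
next
  assume "\<exists>c j. c \<in> Lam \<and> x = c + z12 (2 * j + 1)"
  then obtain c j where cj: "c \<in> Lam" "x = c + z12 (2 * j + 1)" by blast
  define k where "k = nat (j mod 12)"
  have j0: "0 \<le> j mod 12" "j mod 12 < 12" by simp_all
  then have k: "k < 12" "int k = j mod 12" unfolding k_def by linarith+
  have "2 * j + 1 = (2 * int k + 1) + 24 * (j div 12)" using div_mult_mod_eq[of j 12] k(2) by linarith
  then have "z12 (2 * j + 1) = z12 (2 * int k + 1)" using z12_shift by metis
  also have "\<dots> = cis ((2 * real k + 1) * pi / 12)" unfolding z12_def by simp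
  finally have xk: "x = c + cis ((2 * real k + 1) * pi / 12)" using cj by simp
  show "x \<in> V8" unfolding V8_def mem_Collect_eq
    by (rule exI[of _ c], rule exI[of _ k]) (use xk cj k(1) in simp)
qed

lemma V8_lin: "x \<in> V8 \<Longrightarrow> lin s r x \<in> V8"
proof -
  assume "x \<in> V8"
  then obtain c j where cj: "c \<in> Lam" "x = c + z12 (2 * j + 1)" unfolding V8_iff by blast
  have "lin s r x = lin s r c + z12 (2 * (if s then 2 * r - j - 1 else 2 * r + j) + 1)"
    unfolding cj lin_add lin_z12 by (cases s) (simp_all add: algebra_simps)
  then show ?thesis unfolding V8_iff using lin_Lam[OF cj(1)] by blast
qed

lemma V8_trans: "x \<in> V8 \<Longrightarrow> b \<in> Lam \<Longrightarrow> x + b \<in> V8"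
proof -
  assume "x \<in> V8" "b \<in> Lam"
  then obtain c j where cj: "c \<in> Lam" "x = c + z12 (2 * j + 1)" unfolding V8_iff by blast
  have "x + b = (c + b) + z12 (2 * j + 1)" unfolding cj by simp
  then show ?thesis unfolding V8_iff using Lam_add[OF cj(1) \<open>b \<in> Lam\<close>] by blast
qed

lemma gf_image:
  assumes linX: "\<And>x s r. x \<in> X \<Longrightarrow> lin s r x \<in> X"
    and trX: "\<And>x b. x \<in> X \<Longrightarrow> b \<in> Lam \<Longrightarrow> x + b \<in> X"
    and b: "b \<in> Lam"
  shows "gf s r b ` X = X"
proof
  show "gf s r b ` X \<subseteq> X" unfolding gf_def using linX trX b by auto
  show "X \<subseteq> gf s r b ` X"
  proof
    fix y assume "y \<in> X"
    define x where "x = lin s (rinv s r) (y + - b)"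
    have "x \<in> X" unfolding x_def using trX[OF \<open>y \<in> X\<close> Lam_uminus[OF b]] linX by blast
    moreover have "gf s r b x = y" unfolding gf_def x_def lin_inv1 by simp
    ultimately show "y \<in> gf s r b ` X" by force
  qed
qed

lemma gf_isometry: "isometry (gf s r b)"
  unfolding isometry_def gf_def dist_norm
  by (metis add_diff_cancel_right lin_diff lin_norm)

lemma Gs_AutS: "Gs \<subseteq> AutS"
proof
  fix g assume "g \<in> Gs"
  then obtain s r b where g: "g = gf s r b" "b \<in> Lam" unfolding Gs_def by blast
  have "g ` Lam = Lam" unfolding g(1) by (rule gf_image) (use lin_Lam Lam_add g(2) in auto)
  then show "g \<in> AutS" unfolding AutS_def AutT_def using gf_isometry g(1) by blast
qed

lemma Gs_Aut8: "Gs \<subseteq> Aut8"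
proof
  fix g assume "g \<in> Gs"
  then obtain s r b where g: "g = gf s r b" "b \<in> Lam" unfolding Gs_def by blast
  have "g ` V8 = V8" unfolding g(1) by (rule gf_image) (use V8_lin V8_trans g(2) in auto)
  then show "g \<in> Aut8" unfolding Aut8_def AutT_def using gf_isometry g(1) by blast
qed

lemma lin_form:
  assumes "cmod \<alpha> = 1" "g = (\<lambda>z. \<alpha> * z + \<beta>) \<or> g = (\<lambda>z. \<alpha> * cnj z + \<beta>)"
    and "\<alpha> * complex_of_real dd \<in> Lam" "\<beta> \<in> Lam"
  shows "g \<in> Gs"
proof -
  have "cmod (\<alpha> * complex_of_real dd) = dd" using assms(1) dd_pos by (simp add: norm_mult)
  then obtain r where "\<alpha> * complex_of_real dd = complex_of_real dd * z12 (4 * r)"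
    using Lam_norm_dd assms(3) by blast
  then have a: "\<alpha> = z12 (4 * r)" using dd_pos by (simp add: mult.commute)
  from assms(2) show ?thesis
  proof
    assume "g = (\<lambda>z. \<alpha> * z + \<beta>)"
    then have "g = gf False r \<beta>" unfolding gf_def lin_def a by (simp add: fun_eq_iff)
    then show ?thesis unfolding Gs_def using assms(4) by blast
  next
    assume "g = (\<lambda>z. \<alpha> * cnj z + \<beta>)"
    then have "g = gf True r \<beta>" unfolding gf_def lin_def a by (simp add: fun_eq_iff)
    then show ?thesis unfolding Gs_def using assms(4) by blast
  qed
qed

lemma AutS_Gs: "AutS \<subseteq> Gs"
proof
  fix g assume "g \<in> AutS"
  then have iso: "isometry g" and im: "g ` Lam = Lam" unfolding AutS_def AutT_def by auto
  obtain \<alpha> \<beta> where ab: "cmod \<alpha> = 1" "g = (\<lambda>z. \<alpha> * z + \<beta>) \<or> g = (\<lambda>z. \<alpha> * cnj z + \<beta>)"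
    using isometry_affine[OF iso] by blast
  have g0: "g 0 = \<beta>" using ab(2) by auto
  have gdd: "g (complex_of_real dd) = \<alpha> * complex_of_real dd + \<beta>" using ab(2) by auto
  have "\<beta> \<in> Lam" using im g0 Lam_0 by blast
  moreover have "g (complex_of_real dd) \<in> Lam" using im Lam_dd by blast
  ultimately have "\<alpha> * complex_of_real dd \<in> Lam" using Lam_diff gdd by fastforce
  then show "g \<in> Gs" using lin_form ab \<open>\<beta> \<in> Lam\<close> by blast
qed

lemma AutS_eq: "AutS = Gs" using AutS_Gs Gs_AutS by blast

lemma L1: "x \<in> V8 \<Longrightarrow> c \<in> Lam \<Longrightarrow> cmod (x - c) \<ge> 9/10"
proof -
  assume "x \<in> V8" "c \<in> Lam"
  then obtain c0 j where cj: "c0 \<in> Lam" "x = c0 + z12 (2 * j + 1)" unfolding V8_iff by blast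
  have dL: "c0 - c \<in> Lam" using Lam_diff cj(1) \<open>c \<in> Lam\<close> by blast
  have xe: "x - c = (c0 - c) + z12 (2 * j + 1)" unfolding cj by simp
  show ?thesis
  proof (cases "c0 - c = 0")
    case True then show ?thesis unfolding xe by simp
  next
    case False
    then have "cmod (c0 - c) \<ge> 19/10" using Lam_norm_ge[OF dL] dd_ge by linarith
    moreover have "cmod (c0 - c) \<le> cmod ((c0 - c) + z12 (2 * j + 1)) + 1"
      using norm_triangle_ineq4[of "(c0 - c) + z12 (2 * j + 1)" "z12 (2 * j + 1)"] by simp
    ultimately show ?thesis unfolding xe by linarith
  qed
qed

definition C12 :: "int \<Rightarrow> real" where "C12 n = cos (real_of_int n * pi / 12)"

lemma C12_neg: "C12 (- n) = C12 n"
  unfolding C12_def by simp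

lemma norm3: "(cmod (z12 a + z12 b + z12 c))^2 = 3 + 2 * (C12 (a - b) + C12 (a - c) + C12 (b - c))"
proof -
  define x where "x = real_of_int a * pi / 12"
  define y where "y = real_of_int b * pi / 12"
  define z where "z = real_of_int c * pi / 12"
  have e: "C12 (a - b) = cos (x - y)" "C12 (a - c) = cos (x - z)" "C12 (b - c) = cos (y - z)"
    unfolding C12_def x_def y_def z_def by (simp_all add: diff_divide_distrib left_diff_distrib)
  have "(cmod (z12 a + z12 b + z12 c))^2 = (cos x + cos y + cos z)^2 + (sin x + sin y + sin z)^2"
    unfolding cmod_power2 z12_def x_def y_def z_def by simp
  also have "\<dots> = 3 + 2 * (cos (x - y) + cos (x - z) + cos (y - z))"
    using sin_cos_squared_add3[of x] sin_cos_squared_add3[of y] sin_cos_squared_add3[of z]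
    unfolding cos_diff power2_eq_square by algebra
  finally show ?thesis unfolding e .
qed

lemma C12_6: "C12 6 = 0"
proof -
  have h: "real_of_int 6 * pi / 12 = pi / 2" by simp
  show ?thesis unfolding C12_def h cos_pi_half by simp
qed

lemma C12_8: "C12 8 = - 1/2"
proof -
  have h: "real_of_int 8 * pi / 12 = pi - pi / 3" by simp
  show ?thesis unfolding C12_def h cos_pi_minus cos_60 by simp
qed

lemma C12_10: "C12 10 = - sqrt 3 / 2"
proof -
  have h: "real_of_int 10 * pi / 12 = pi - pi / 6" by simp
  show ?thesis unfolding C12_def h cos_pi_minus cos_30 by simp
qed

lemma C12_14: "C12 14 = - sqrt 3 / 2"
proof -
  have h: "real_of_int 14 * pi / 12 = pi / 6 + pi" by simp
  show ?thesis unfolding C12_def h cos_periodic_pi cos_30 by simp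
qed

lemma C12_16: "C12 16 = - 1/2"
proof -
  have h: "real_of_int 16 * pi / 12 = pi / 3 + pi" by simp
  show ?thesis unfolding C12_def h cos_periodic_pi cos_60 by simp
qed

lemma C12_18: "C12 18 = 0"
proof -
  have h: "real_of_int 18 * pi / 12 = pi / 2 + pi" by simp
  show ?thesis unfolding C12_def h cos_periodic_pi cos_pi_half by simp
qed

lemmas C12_vals = C12_6 C12_8 C12_10 C12_14 C12_16 C12_18

lemma small_norm:
  assumes "(cmod z)^2 < 81/100" shows "cmod z < 9/10"
proof (rule ccontr)
  assume "\<not> cmod z < 9/10"
  then have "(9/10) * (9/10) \<le> cmod z * cmod z" by (intro mult_mono) auto
  then show False using assms by (simp add: power2_eq_square)
qed

lemma num_1: "cmod (z12 21 + z12 3 + z12 13) < 9/10"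
  by (rule small_norm) (simp add: norm3 C12_neg C12_vals, use sqrt3_bounds in linarith)

lemma num_2: "cmod (z12 23 + z12 5 + z12 13) < 9/10"
  by (rule small_norm) (simp add: norm3 C12_neg C12_vals, use sqrt3_bounds in linarith)

lemma num_3: "cmod (z12 23 + z12 7 + z12 13) < 9/10"
  by (rule small_norm) (simp add: norm3 C12_neg C12_vals, use sqrt3_bounds in linarith)

lemma num_4: "cmod (z12 15 + z12 9 + z12 (-1)) < 9/10"
  by (rule small_norm) (simp add: norm3 C12_neg C12_vals, use sqrt3_bounds in linarith)

lemma num_6: "cmod (z12 7 + z12 13 + z12 (-1)) < 9/10"
  by (rule small_norm) (simp add: norm3 C12_neg C12_vals, use sqrt3_bounds in linarith)

lemma num_7: "cmod (z12 5 + z12 15 + z12 (-1)) < 9/10"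
  by (rule small_norm) (simp add: norm3 C12_neg C12_vals, use sqrt3_bounds in linarith)

lemma num_8: "cmod (z12 9 + z12 17 + z12 (-1)) < 9/10"
  by (rule small_norm) (simp add: norm3 C12_neg C12_vals, use sqrt3_bounds in linarith)

lemma num_9: "cmod (z12 3 + z12 19 + z12 13) < 9/10"
  by (rule small_norm) (simp add: norm3 C12_neg C12_vals, use sqrt3_bounds in linarith)

lemma num_10: "cmod (z12 3 + z12 21 + z12 13) < 9/10"
  by (rule small_norm) (simp add: norm3 C12_neg C12_vals, use sqrt3_bounds in linarith)

lemma num_11: "cmod (z12 5 + z12 23 + z12 13) < 9/10"
  by (rule small_norm) (simp add: norm3 C12_neg C12_vals, use sqrt3_bounds in linarith)


lemma bad:
  assumes H: "\<forall>v\<in>V8. v + w0 \<in> V8" and c2: "c2 \<in> Lam"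
    and sm: "cmod (z12 (2 * j + 1) + w0 - c2) < 9/10"
  shows False
proof -
  have "z12 (2 * j + 1) \<in> V8" unfolding V8_iff by (rule exI[of _ 0]) auto
  then have "z12 (2 * j + 1) + w0 \<in> V8" using H by blast
  then have "cmod (z12 (2 * j + 1) + w0 - c2) \<ge> 9/10" using L1 c2 by blast
  then show False using sm by linarith
qed

lemma bad0:
  assumes H: "\<forall>v\<in>V8. v + w0 \<in> V8" and w0: "w0 = z12 (2 * k + 1) - z12 1"
    and sm: "cmod (z12 (2 * j + 1) + z12 (2 * k + 1) + z12 13) < 9/10"
  shows False
proof -
  have "z12 13 = - z12 1" using z12_add12[of 1] by simp
  then have "z12 (2 * j + 1) + w0 - 0 = z12 (2 * j + 1) + z12 (2 * k + 1) + z12 13"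
    unfolding w0 by simp
  then have "cmod (z12 (2 * j + 1) + w0 - 0) < 9/10" using sm by metis
  then show False using bad[OF H Lam_0] by blast
qed

lemma bad1:
  assumes H: "\<forall>v\<in>V8. v + w0 \<in> V8" and w0: "w0 = z12 (2 * k + 1) - z12 1"
    and sm: "cmod (z12 (2 * j + 1) + z12 (2 * k + 1) + z12 (-1)) < 9/10"
  shows False
proof -
  have "z12 (2 * j + 1) + w0 - (- complex_of_real dd) = z12 (2 * j + 1) + z12 (2 * k + 1) + z12 (-1)"
    unfolding w0 dd_complex by simp
  then have "cmod (z12 (2 * j + 1) + w0 - (- complex_of_real dd)) < 9/10" using sm by metis
  then show False using bad[OF H Lam_uminus[OF Lam_dd]] by blast
qed

lemma trans_Lam:
  assumes H: "\<forall>v\<in>V8. v + w \<in> V8"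
  shows "w \<in> Lam"
proof -
  have "z12 1 \<in> V8" unfolding V8_iff by (rule exI[of _ 0], rule exI[of _ 0]) auto
  then have "z12 1 + w \<in> V8" using H by blast
  then obtain c k where ck: "c \<in> Lam" "z12 1 + w = c + z12 (2 * k + 1)" unfolding V8_iff by blast
  define k' where "k' = k mod 12"
  have "2 * k + 1 = (2 * k' + 1) + 24 * (k div 12)" using div_mult_mod_eq[of k 12] unfolding k'_def by linarith
  then have zk: "z12 (2 * k + 1) = z12 (2 * k' + 1)" using z12_shift by metis
  define w0 where "w0 = z12 (2 * k' + 1) - z12 1"
  have w: "w = c + w0" unfolding w0_def using ck(2) zk by (simp add: algebra_simps)
  have H0: "\<forall>v\<in>V8. v + w0 \<in> V8"
  proof
    fix v assume "v \<in> V8"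
    then have "v + - c \<in> V8" using V8_trans Lam_uminus ck(1) by blast
    then have "(v + - c) + w \<in> V8" using H by blast
    then show "v + w0 \<in> V8" unfolding w by (simp add: algebra_simps)
  qed
  have "0 \<le> k'" "k' < 12" unfolding k'_def by simp_all
  then have "k' = 0 \<or> k' = 1 \<or> k' = 2 \<or> k' = 3 \<or> k' = 4 \<or> k' = 5 \<or> k' = 6 \<or> k' = 7 \<or>
      k' = 8 \<or> k' = 9 \<or> k' = 10 \<or> k' = 11" by presburger
  then have "w0 \<in> Lam"
  proof (elim disjE)
    assume "k' = 0" then show ?thesis unfolding w0_def by simp
  next
    assume "k' = 5"
    have "z12 11 = - z12 (-1)" using z12_add12[of "-1"] by simp
    then have "w0 = - complex_of_real dd" unfolding w0_def \<open>k' = 5\<close> dd_complex by simp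
    then show ?thesis using Lam_uminus[OF Lam_dd] by simp
  next
    assume "k' = 1" then show ?thesis using bad0[OF H0 w0_def, of 10] num_1 by simp
  next
    assume "k' = 2" then show ?thesis using bad0[OF H0 w0_def, of 11] num_2 by simp
  next
    assume "k' = 3" then show ?thesis using bad0[OF H0 w0_def, of 11] num_3 by simp
  next
    assume "k' = 4" then show ?thesis using bad1[OF H0 w0_def, of 7] num_4 by simp
  next
    assume "k' = 6" then show ?thesis using bad1[OF H0 w0_def, of 3] num_6 by simp
  next
    assume "k' = 7" then show ?thesis using bad1[OF H0 w0_def, of 2] num_7 by simp
  next
    assume "k' = 8" then show ?thesis using bad1[OF H0 w0_def, of 4] num_8 by simp
  next
    assume "k' = 9" then show ?thesis using bad0[OF H0 w0_def, of 1] num_9 by simp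
  next
    assume "k' = 10" then show ?thesis using bad0[OF H0 w0_def, of 1] num_10 by simp
  next
    assume "k' = 11" then show ?thesis using bad0[OF H0 w0_def, of 2] num_11 by simp
  qed
  then show ?thesis unfolding w using Lam_add ck(1) by blast
qed

lemma lin_form2:
  assumes "cmod \<alpha> = 1" "g = (\<lambda>z. \<alpha> * z + \<beta>) \<or> g = (\<lambda>z. \<alpha> * cnj z + \<beta>)"
    and "\<alpha> * complex_of_real dd \<in> Lam"
  shows "\<exists>s r. g = gf s r \<beta>"
proof -
  have "cmod (\<alpha> * complex_of_real dd) = dd" using assms(1) dd_pos by (simp add: norm_mult)
  then obtain r where "\<alpha> * complex_of_real dd = complex_of_real dd * z12 (4 * r)"
    using Lam_norm_dd assms(3) by blast
  then have a: "\<alpha> = z12 (4 * r)" using dd_pos by (simp add: mult.commute)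
  from assms(2) show ?thesis
  proof
    assume "g = (\<lambda>z. \<alpha> * z + \<beta>)"
    then have "g = gf False r \<beta>" unfolding gf_def lin_def a by (simp add: fun_eq_iff)
    then show ?thesis by blast
  next
    assume "g = (\<lambda>z. \<alpha> * cnj z + \<beta>)"
    then have "g = gf True r \<beta>" unfolding gf_def lin_def a by (simp add: fun_eq_iff)
    then show ?thesis by blast
  qed
qed

lemma Aut8_Gs: "Aut8 \<subseteq> Gs"
proof
  fix g assume "g \<in> Aut8"
  then have iso: "isometry g" and im: "g ` V8 = V8" unfolding Aut8_def AutT_def by auto
  obtain \<alpha> \<beta> where ab: "cmod \<alpha> = 1" "g = (\<lambda>z. \<alpha> * z + \<beta>) \<or> g = (\<lambda>z. \<alpha> * cnj z + \<beta>)"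
    using isometry_affine[OF iso] by blast
  have gadd: "g (x + w) = g x + (g w - g 0)" for x w using ab(2) by (auto simp: algebra_simps)
  have gdd: "g (complex_of_real dd) - g 0 = \<alpha> * complex_of_real dd" using ab(2) by auto
  have "\<forall>v\<in>V8. v + (g (complex_of_real dd) - g 0) \<in> V8"
  proof
    fix v assume "v \<in> V8"
    then obtain x where x: "x \<in> V8" "v = g x" using im by blast
    have "x + complex_of_real dd \<in> V8" using V8_trans[OF x(1) Lam_dd] .
    then have "g (x + complex_of_real dd) \<in> V8" using im by blast
    then show "v + (g (complex_of_real dd) - g 0) \<in> V8" using gadd x(2) by simp
  qed
  then have "\<alpha> * complex_of_real dd \<in> Lam" using trans_Lam gdd by simp
  then obtain s r where g: "g = gf s r \<beta>" using lin_form2 ab by blast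
  have "\<forall>v\<in>V8. v + \<beta> \<in> V8"
  proof
    fix v assume "v \<in> V8"
    then have "lin s (rinv s r) v \<in> V8" by (rule V8_lin)
    then have "g (lin s (rinv s r) v) \<in> V8" using im by blast
    then show "v + \<beta> \<in> V8" unfolding g gf_def lin_inv1 .
  qed
  then have "\<beta> \<in> Lam" by (rule trans_Lam)
  then show "g \<in> Gs" unfolding Gs_def g by blast
qed

lemma Aut8_eq: "Aut8 = Gs" using Aut8_Gs Gs_Aut8 by blast

definition LL :: "(complex \<Rightarrow> complex) set \<Rightarrow> complex set" where
  "LL K = {w. (\<lambda>z. z + w) \<in> K}"

definition Nc :: "(complex \<Rightarrow> complex) set \<Rightarrow> (complex \<Rightarrow> complex) set" where
  "Nc K = {gf s r b | s r b. b \<in> Lam \<and> lin s r ` LL K = LL K}"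

lemma K_eq:
  assumes "translation_lattice_group G K"
  shows "K = (\<lambda>w. (\<lambda>z. z + w)) ` LL K"
proof
  show "K \<subseteq> (\<lambda>w. (\<lambda>z. z + w)) ` LL K"
  proof
    fix k assume "k \<in> K"
    then obtain w where "k = (\<lambda>z. z + w)" using assms unfolding translation_lattice_group_def by blast
    then show "k \<in> (\<lambda>w. (\<lambda>z. z + w)) ` LL K" unfolding LL_def using \<open>k \<in> K\<close> by blast
  qed
  show "(\<lambda>w. (\<lambda>z. z + w)) ` LL K \<subseteq> K" unfolding LL_def by blast
qed

lemma LL_uminus:
  assumes "translation_lattice_group G K"
  shows "uminus ` LL K = LL K"
proof -
  have h: "w \<in> LL K \<Longrightarrow> - w \<in> LL K" for w
  proof -
    assume "w \<in> LL K"
    then have "(\<lambda>z. z - w) \<in> K" using assms unfolding translation_lattice_group_def LL_def by blast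
    then show "- w \<in> LL K" unfolding LL_def by simp
  qed
  show ?thesis
  proof
    show "uminus ` LL K \<subseteq> LL K" using h by blast
    show "LL K \<subseteq> uminus ` LL K"
    proof
      fix w assume "w \<in> LL K"
      then have "- w \<in> LL K" by (rule h)
      then show "w \<in> uminus ` LL K" by (metis image_eqI minus_minus)
    qed
  qed
qed

lemma normaliser_eq:
  assumes "translation_lattice_group G K"
  shows "normaliser Gs K = Nc K"
proof -
  let ?T = "\<lambda>w. (\<lambda>z::complex. z + w)"
  define L where "L = LL K"
  have KE: "K = ?T ` L" unfolding L_def by (rule K_eq[OF assms])
  have key: "((\<lambda>k. gf s r b \<circ> k) ` K = (\<lambda>k. k \<circ> gf s r b) ` K) \<longleftrightarrow> lin s r ` L = L"
    for s r b
  proof -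
    let ?g = "gf s r b"
    let ?U = "\<lambda>w. ?T w \<circ> ?g"
    have injU: "inj ?U"
    proof (rule injI)
      fix w w' assume "?U w = ?U w'"
      then have "?g 0 + w = ?g 0 + w'" by (metis comp_apply)
      then show "w = w'" by simp
    qed
    have fe: "(\<lambda>w. ?g \<circ> ?T w) = (\<lambda>w. ?U (lin s r w))"
      by (rule ext, rule ext) (simp add: gf_def lin_add algebra_simps)
    have e1: "(\<lambda>k. ?g \<circ> k) ` K = ?U ` (lin s r ` L)"
      unfolding KE image_image fe by simp
    have e2: "(\<lambda>k. k \<circ> ?g) ` K = ?U ` L"
      unfolding KE image_image by simp
    show ?thesis unfolding e1 e2 using injU by (simp add: inj_image_eq_iff)
  qed
  show ?thesis
  proof
    show "normaliser Gs K \<subseteq> Nc K"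
    proof
      fix g assume "g \<in> normaliser Gs K"
      then have "g \<in> Gs" and gK: "(\<lambda>k. g \<circ> k) ` K = (\<lambda>k. k \<circ> g) ` K"
        unfolding normaliser_def by auto
      then obtain s r b where g: "g = gf s r b" "b \<in> Lam" unfolding Gs_def by blast
      have "lin s r ` L = L" using key[of s r b] gK unfolding g(1) by simp
      then have "lin s r ` LL K = LL K" unfolding L_def .
      then show "g \<in> Nc K" unfolding Nc_def mem_Collect_eq
        by (intro exI[of _ s] exI[of _ r] exI[of _ b]) (simp add: g)
    qed
    show "Nc K \<subseteq> normaliser Gs K"
    proof
      fix g assume "g \<in> Nc K"
      then obtain s r b where g: "g = gf s r b" "b \<in> Lam" "lin s r ` LL K = LL K"
        unfolding Nc_def by blast
      then have "g \<in> Gs" unfolding Gs_def by blast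
      moreover have "(\<lambda>k. g \<circ> k) ` K = (\<lambda>k. k \<circ> g) ` K"
        using key[of s r b] g(3) unfolding g(1) L_def by simp
      ultimately show "g \<in> normaliser Gs K" unfolding normaliser_def by blast
    qed
  qed
qed

lemma gf_comp: "gf s r b \<circ> gf s' r' b' = gf (s \<noteq> s') (if s then r - r' else r + r') (lin s r b' + b)"
  unfolding gf_def by (simp add: fun_eq_iff lin_add lin_comp)

lemma lin_comp_fun: "lin s r \<circ> lin s' r' = lin (s \<noteq> s') (if s then r - r' else r + r')"
  by (simp add: fun_eq_iff lin_comp)

lemma Nc_comp: "g \<in> Nc K \<Longrightarrow> h \<in> Nc K \<Longrightarrow> h \<circ> g \<in> Nc K"
proof -
  assume "g \<in> Nc K" "h \<in> Nc K"
  then obtain s r b s' r' b' where g: "g = gf s' r' b'" "b' \<in> Lam" "lin s' r' ` LL K = LL K"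
    and h: "h = gf s r b" "b \<in> Lam" "lin s r ` LL K = LL K"
    unfolding Nc_def by blast
  have "lin (s \<noteq> s') (if s then r - r' else r + r') ` LL K = LL K"
    unfolding lin_comp_fun[symmetric] image_comp[symmetric] g(3) h(3) ..
  moreover have "lin s r b' + b \<in> Lam" using lin_Lam g(2) h(2) Lam_add by blast
  ultimately show ?thesis unfolding Nc_def g(1) h(1) gf_comp by blast
qed

lemma Nc_inv: "g \<in> Nc K \<Longrightarrow> \<exists>g'\<in>Nc K. \<forall>z. g' (g z) = z"
proof -
  assume "g \<in> Nc K"
  then obtain s r b where g: "g = gf s r b" "b \<in> Lam" "lin s r ` LL K = LL K"
    unfolding Nc_def by blast
  define g' where "g' = gf s (rinv s r) (- lin s (rinv s r) b)"
  have "lin s (rinv s r) ` LL K = LL K"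
  proof -
    have "lin s (rinv s r) ` LL K = lin s (rinv s r) ` (lin s r ` LL K)" using g(3) by simp
    also have "\<dots> = LL K" by (simp add: image_image lin_inv2)
    finally show ?thesis .
  qed
  moreover have "- lin s (rinv s r) b \<in> Lam" using lin_Lam Lam_uminus g(2) by blast
  ultimately have "g' \<in> Nc K" unfolding Nc_def g'_def by blast
  moreover have "g' (g z) = z" for z unfolding g'_def g(1) gf_def lin_add lin_inv2 by simp
  ultimately show ?thesis by blast
qed

lemma Nc_id: "(\<lambda>z. z) \<in> Nc K"
proof -
  have "(\<lambda>z. z) = gf False 0 0" unfolding gf_def by (simp add: fun_eq_iff)
  moreover have "lin False 0 ` LL K = LL K" by simp
  ultimately show ?thesis unfolding Nc_def mem_Collect_eq
    by (intro exI[of _ False] exI[of _ 0]) simp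
qed

definition orb :: "(complex \<Rightarrow> complex) set \<Rightarrow> complex set \<Rightarrow> complex set set" where
  "orb K e = (\<lambda>g. g ` e) ` Nc K"

lemma orb_sub: "g \<in> Nc K \<Longrightarrow> orb K (g ` e) \<subseteq> orb K e"
proof
  assume g: "g \<in> Nc K"
  fix x assume "x \<in> orb K (g ` e)"
  then obtain h where h: "h \<in> Nc K" "x = h ` (g ` e)" unfolding orb_def by blast
  then have "x = (h \<circ> g) ` e" by (simp add: image_comp)
  then show "x \<in> orb K e" unfolding orb_def using Nc_comp[OF g h(1)] by blast
qed

lemma orb_move: "g \<in> Nc K \<Longrightarrow> orb K (g ` e) = orb K e"
proof
  assume g: "g \<in> Nc K"
  show "orb K (g ` e) \<subseteq> orb K e" by (rule orb_sub[OF g])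
  obtain g' where g': "g' \<in> Nc K" "\<forall>z. g' (g z) = z" using Nc_inv[OF g] by blast
  have "g' ` (g ` e) = e" using g'(2) by (simp add: image_comp comp_def)
  then show "orb K e \<subseteq> orb K (g ` e)" using orb_sub[OF g'(1), of "g ` e"] by simp
qed

lemma orb_iff: "orb K e = orb K e' \<longleftrightarrow> (\<exists>g\<in>Nc K. e' = g ` e)"
proof
  assume "orb K e = orb K e'"
  moreover have "(\<lambda>z. z) ` e' \<in> orb K e'" unfolding orb_def using Nc_id by (rule imageI)
  ultimately have "e' \<in> orb K e" by simp
  then show "\<exists>g\<in>Nc K. e' = g ` e" unfolding orb_def by blast
next
  assume "\<exists>g\<in>Nc K. e' = g ` e"
  then show "orb K e = orb K e'" using orb_move by metis
qed

definition e8 :: "complex \<Rightarrow> int \<Rightarrow> complex set" where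
  "e8 c j = {c + z12 (2 * j + 1), c + z12 (2 * j + 3)}"

definition es :: "complex \<Rightarrow> int \<Rightarrow> complex set" where
  "es c r = {c, c + complex_of_real dd * z12 (4 * r)}"

lemma mod_ex: "(a::int) mod n = b mod n \<longleftrightarrow> (\<exists>k. a = b + n * k)"
proof -
  have "(a mod n = b mod n) = (n dvd a - b)" by (rule mod_eq_dvd_iff)
  also have "\<dots> = (\<exists>k. a - b = n * k)" unfolding dvd_def ..
  also have "\<dots> = (\<exists>k. a = b + n * k)" by (simp add: algebra_simps)
  finally show ?thesis .
qed

lemma e8_cong: "j mod 12 = j' mod 12 \<Longrightarrow> e8 c j = e8 c j'"
proof -
  assume h: "j mod 12 = j' mod 12"
  obtain k where k: "j = j' + 12 * k" using h unfolding mod_ex by blast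
  have "2 * j + 1 = (2 * j' + 1) + 24 * k" using k by simp
  then have "(2 * j + 1) mod 24 = (2 * j' + 1) mod 24" unfolding mod_ex by blast
  moreover have "2 * j + 3 = (2 * j' + 3) + 24 * k" using k by simp
  then have "(2 * j + 3) mod 24 = (2 * j' + 3) mod 24" unfolding mod_ex by blast
  ultimately show ?thesis unfolding e8_def using z12_cong by metis
qed

lemma es_cong: "r mod 6 = r' mod 6 \<Longrightarrow> es c r = es c r'"
proof -
  assume h: "r mod 6 = r' mod 6"
  obtain k where k: "r = r' + 6 * k" using h unfolding mod_ex by blast
  have "4 * r = 4 * r' + 24 * k" using k by simp
  then have "(4 * r) mod 24 = (4 * r') mod 24" unfolding mod_ex by blast
  then show ?thesis unfolding es_def using z12_cong by metis
qed

lemma Edges8_eq: "Edges8 = {e8 c j | c j. c \<in> Lam}"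
proof
  show "Edges8 \<subseteq> {e8 c j | c j. c \<in> Lam}"
  proof
    fix e assume "e \<in> Edges8"
    then obtain c k where ck: "c \<in> Lam" "k < (12::nat)"
      "e = {c + cis ((2 * real k + 1) * pi / 12), c + cis ((2 * real k + 3) * pi / 12)}"
      unfolding Edges8_def by blast
    have "cis ((2 * real k + 1) * pi / 12) = z12 (2 * int k + 1)" unfolding z12_def by simp
    moreover have "cis ((2 * real k + 3) * pi / 12) = z12 (2 * int k + 3)" unfolding z12_def by simp
    ultimately have "e = e8 c (int k)" unfolding ck(3) e8_def by simp
    then show "e \<in> {e8 c j | c j. c \<in> Lam}" using ck(1) by blast
  qed
  show "{e8 c j | c j. c \<in> Lam} \<subseteq> Edges8"
  proof
    fix e assume "e \<in> {e8 c j | c j. c \<in> Lam}"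
    then obtain c j where cj: "c \<in> Lam" "e = e8 c j" by blast
    define k where "k = nat (j mod 12)"
    have j0: "0 \<le> j mod 12" "j mod 12 < 12" by simp_all
    then have k: "k < 12" "int k = j mod 12" unfolding k_def by linarith+
    have "e = e8 c (int k)" unfolding cj(2) by (rule e8_cong) (simp add: k(2))
    also have "\<dots> = {c + cis ((2 * real k + 1) * pi / 12), c + cis ((2 * real k + 3) * pi / 12)}"
      unfolding e8_def z12_def by simp
    finally have ek: "e = {c + cis ((2 * real k + 1) * pi / 12), c + cis ((2 * real k + 3) * pi / 12)}" .
    show "e \<in> Edges8" unfolding Edges8_def mem_Collect_eq
      by (rule exI[of _ c], rule exI[of _ k]) (use ek cj k(1) in simp)
  qed
qed

lemma EdgesS_eq: "EdgesS = {es c r | c r. c \<in> Lam}"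
proof
  show "EdgesS \<subseteq> {es c r | c r. c \<in> Lam}"
  proof
    fix e assume "e \<in> EdgesS"
    then obtain x y where xy: "x \<in> Lam" "y \<in> Lam" "dist x y = dd" "e = {x, y}"
      unfolding EdgesS_def by blast
    have "y - x \<in> Lam" using Lam_diff xy by blast
    moreover have "cmod (y - x) = dd" using xy(3) by (simp add: dist_norm norm_minus_commute)
    ultimately obtain r where "y - x = complex_of_real dd * z12 (4 * r)" using Lam_norm_dd by blast
    then have "e = es x r" unfolding xy(4) es_def by (simp add: algebra_simps)
    then show "e \<in> {es c r | c r. c \<in> Lam}" using xy(1) by blast
  qed
  show "{es c r | c r. c \<in> Lam} \<subseteq> EdgesS"
  proof
    fix e assume "e \<in> {es c r | c r. c \<in> Lam}"
    then obtain c r where cr: "c \<in> Lam" "e = es c r" by blast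
    have y: "c + complex_of_real dd * z12 (4 * r) \<in> Lam"
      using Lam_add[OF cr(1) Lam_rot[OF Lam_dd, of r]] by (simp add: mult.commute)
    have "dist c (c + complex_of_real dd * z12 (4 * r)) = dd"
      using dd_pos by (simp add: dist_norm norm_mult)
    then show "e \<in> EdgesS" unfolding EdgesS_def cr(2) es_def using cr(1) y by blast
  qed
qed

lemma gf_pt: "gf s r b (c + z12 a) = (lin s r c + b) + z12 (if s then 4 * r - a else 4 * r + a)"
  unfolding gf_def lin_add lin_z12 by simp

lemma gf_e8: "gf s r b ` e8 c j = e8 (lin s r c + b) (if s then 2 * r - j - 2 else j + 2 * r)"
proof -
  let ?X = "lin s r c + b"
  have im: "gf s r b ` e8 c j = {?X + z12 (if s then 4 * r - (2 * j + 1) else 4 * r + (2 * j + 1)),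
      ?X + z12 (if s then 4 * r - (2 * j + 3) else 4 * r + (2 * j + 3))}"
    unfolding e8_def image_insert image_empty gf_pt ..
  show ?thesis
  proof (cases s)
    case True
    have q: "z12 (4 * r - (2 * j + 1)) = z12 (2 * (2 * r - j - 2) + 3)"
      "z12 (4 * r - (2 * j + 3)) = z12 (2 * (2 * r - j - 2) + 1)"
      by (rule arg_cong[where f = z12], simp)+
    show ?thesis unfolding im unfolding if_P[OF True] q e8_def by (rule insert_commute)
  next
    case False
    have q: "z12 (4 * r + (2 * j + 1)) = z12 (2 * (j + 2 * r) + 1)"
      "z12 (4 * r + (2 * j + 3)) = z12 (2 * (j + 2 * r) + 3)"
      by (rule arg_cong[where f = z12], simp)+
    show ?thesis unfolding im unfolding if_not_P[OF False] q e8_def ..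
  qed
qed

lemma gf_es: "gf s r b ` es c r' = es (lin s r c + b) (if s then r - r' else r + r')"
proof -
  have "gf s r b (c + complex_of_real dd * z12 (4 * r')) =
     (lin s r c + b) + complex_of_real dd * z12 (4 * (if s then r - r' else r + r'))"
    unfolding gf_def lin_add lin_def by (cases s) (simp_all add: z12_mult z12_cnj algebra_simps)
  moreover have "gf s r b c = lin s r c + b" unfolding gf_def ..
  ultimately show ?thesis unfolding es_def by simp
qed

lemma z12_2_ne: "1 - z12 2 \<noteq> 0"
proof
  assume "1 - z12 2 = 0"
  then have "z12 2 = 1" by simp
  then have "(2::int) mod 24 = 0" by (rule z12_eq_1)
  then show False by simp
qed

lemma e8_eq: "e8 c j = e8 c' j' \<Longrightarrow> j' mod 12 = j mod 12 \<or> j' mod 12 = (j + 6) mod 12"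
proof -
  assume h: "e8 c j = e8 c' j'"
  have z3: "z12 (2 * x + 3) = z12 (2 * x + 1) * z12 2" for x by (simp add: z12_mult algebra_simps)
  let ?d = "1 - z12 2"
  from h have "(c + z12 (2 * j + 1) = c' + z12 (2 * j' + 1) \<and> c + z12 (2 * j + 3) = c' + z12 (2 * j' + 3)) \<or>
     (c + z12 (2 * j + 1) = c' + z12 (2 * j' + 3) \<and> c + z12 (2 * j + 3) = c' + z12 (2 * j' + 1))"
    unfolding e8_def by (simp add: doubleton_eq_iff)
  then show ?thesis
  proof
    assume A: "c + z12 (2 * j + 1) = c' + z12 (2 * j' + 1) \<and> c + z12 (2 * j + 3) = c' + z12 (2 * j' + 3)"
    then have "z12 (2 * j + 1) - z12 (2 * j + 3) = z12 (2 * j' + 1) - z12 (2 * j' + 3)"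
      by algebra
    then have "z12 (2 * j + 1) * ?d = z12 (2 * j' + 1) * ?d" unfolding z3 by (simp add: algebra_simps)
    then have "z12 (2 * j + 1) = z12 (2 * j' + 1)" using mult_right_cancel[OF z12_2_ne] by blast
    then have "(2 * j + 1) mod 24 = (2 * j' + 1) mod 24" by (rule z12_inj)
    then obtain k where "2 * j + 1 = (2 * j' + 1) + 24 * k" unfolding mod_ex by blast
    then have "j' = j + 12 * (- k)" by linarith
    then have "j' mod 12 = j mod 12" unfolding mod_ex by blast
    then show ?thesis ..
  next
    assume B: "c + z12 (2 * j + 1) = c' + z12 (2 * j' + 3) \<and> c + z12 (2 * j + 3) = c' + z12 (2 * j' + 1)"
    then have "z12 (2 * j + 1) - z12 (2 * j + 3) = - (z12 (2 * j' + 1) - z12 (2 * j' + 3))"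
      by algebra
    then have "z12 (2 * j + 1) * ?d = (- z12 (2 * j' + 1)) * ?d" unfolding z3 by (simp add: algebra_simps)
    then have "z12 (2 * j + 1) = - z12 (2 * j' + 1)" using mult_right_cancel[OF z12_2_ne] by blast
    also have "\<dots> = z12 (2 * j' + 1 + 12)" by (rule z12_add12[symmetric])
    finally have "(2 * j + 1) mod 24 = (2 * j' + 1 + 12) mod 24" by (rule z12_inj)
    then obtain k where "2 * j + 1 = (2 * j' + 1 + 12) + 24 * k" unfolding mod_ex by blast
    then have "2 * j' = 2 * j - 12 - 24 * k" by linarith
    then have "2 * j' = 2 * ((j + 6) + 12 * (- k - 1))" by (simp add: algebra_simps)
    then have "j' = (j + 6) + 12 * (- k - 1)" by simp
    then have "j' mod 12 = (j + 6) mod 12" unfolding mod_ex by blast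
    then show ?thesis ..
  qed
qed

lemma es_eq: "es c r = es c' r' \<Longrightarrow> r' mod 6 = r mod 6 \<or> r' mod 6 = (r + 3) mod 6"
proof -
  assume h: "es c r = es c' r'"
  have ddn: "complex_of_real dd \<noteq> 0" using dd_pos by simp
  from h have "(c = c' \<and> c + complex_of_real dd * z12 (4 * r) = c' + complex_of_real dd * z12 (4 * r')) \<or>
     (c = c' + complex_of_real dd * z12 (4 * r') \<and> c + complex_of_real dd * z12 (4 * r) = c')"
    unfolding es_def by (simp add: doubleton_eq_iff)
  then show ?thesis
  proof
    assume "c = c' \<and> c + complex_of_real dd * z12 (4 * r) = c' + complex_of_real dd * z12 (4 * r')"
    then have "complex_of_real dd * z12 (4 * r) = complex_of_real dd * z12 (4 * r')" by auto
    then have "z12 (4 * r) = z12 (4 * r')" using mult_left_cancel[OF ddn] by blast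
    then have "(4 * r) mod 24 = (4 * r') mod 24" by (rule z12_inj)
    then obtain k where "4 * r = 4 * r' + 24 * k" unfolding mod_ex by blast
    then have "4 * r' = 4 * r - 24 * k" by linarith
    then have "4 * r' = 4 * (r + 6 * (- k))" by (simp add: algebra_simps)
    then have "r' = r + 6 * (- k)" by simp
    then have "r' mod 6 = r mod 6" unfolding mod_ex by blast
    then show ?thesis ..
  next
    assume B: "c = c' + complex_of_real dd * z12 (4 * r') \<and> c + complex_of_real dd * z12 (4 * r) = c'"
    then have "complex_of_real dd * z12 (4 * r) = complex_of_real dd * (- z12 (4 * r'))"
      by algebra
    then have "z12 (4 * r) = - z12 (4 * r')" using mult_left_cancel[OF ddn] by blast
    also have "\<dots> = z12 (4 * r' + 12)" by (rule z12_add12[symmetric])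
    finally have "(4 * r) mod 24 = (4 * r' + 12) mod 24" by (rule z12_inj)
    then obtain k where "4 * r = (4 * r' + 12) + 24 * k" unfolding mod_ex by blast
    then have "4 * r' = 4 * r - 12 - 24 * k" by linarith
    then have "4 * r' = 4 * ((r + 3) + 6 * (- k - 1))" by (simp add: algebra_simps)
    then have "r' = (r + 3) + 6 * (- k - 1)" by simp
    then have "r' mod 6 = (r + 3) mod 6" unfolding mod_ex by blast
    then show ?thesis ..
  qed
qed

definition PP :: "(complex \<Rightarrow> complex) set \<Rightarrow> bool \<Rightarrow> int \<Rightarrow> bool" where
  "PP K s t \<longleftrightarrow> lin s t ` LL K = LL K"

lemma PP_plus3:
  assumes "translation_lattice_group G K" "PP K s t" shows "PP K s (t + 3)"
proof -
  have "lin s (t + 3) = uminus \<circ> lin s t" by (rule ext) (simp add: lin_plus3)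
  then have "lin s (t + 3) ` LL K = uminus ` (lin s t ` LL K)" by (simp add: image_comp)
  also have "\<dots> = LL K" using assms(2) LL_uminus[OF assms(1)] unfolding PP_def by simp
  finally show ?thesis unfolding PP_def .
qed

lemma PP_minus3:
  assumes "translation_lattice_group G K" "PP K s t" shows "PP K s (t - 3)"
proof -
  have "lin s (t - 3) = uminus \<circ> lin s t" by (rule ext) (simp add: lin_minus3)
  then have "lin s (t - 3) ` LL K = uminus ` (lin s t ` LL K)" by (simp add: image_comp)
  also have "\<dots> = LL K" using assms(2) LL_uminus[OF assms(1)] unfolding PP_def by simp
  finally show ?thesis unfolding PP_def .
qed

definition R8 :: "(complex \<Rightarrow> complex) set \<Rightarrow> int \<Rightarrow> int \<Rightarrow> bool" where
  "R8 K j j' \<longleftrightarrow> (\<exists>s t. PP K s t \<and> j' mod 12 = (if s then 2 * t - j - 2 else j + 2 * t) mod 12)"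

definition RS :: "(complex \<Rightarrow> complex) set \<Rightarrow> int \<Rightarrow> int \<Rightarrow> bool" where
  "RS K r r' \<longleftrightarrow> (\<exists>s t. PP K s t \<and> r' mod 6 = (if s then t - r else r + t) mod 6)"

lemma Nc_gf: "b \<in> Lam \<Longrightarrow> PP K s t \<Longrightarrow> gf s t b \<in> Nc K"
  unfolding Nc_def PP_def by blast

lemma Nc_elim: "g \<in> Nc K \<Longrightarrow> \<exists>s t b. g = gf s t b \<and> b \<in> Lam \<and> PP K s t"
  unfolding Nc_def PP_def by blast

lemma K1:
  assumes T: "translation_lattice_group G K" and c: "c \<in> Lam" "c' \<in> Lam"
  shows "(orb K (e8 c j) = orb K (e8 c' j')) = R8 K j j'"
proof
  assume "orb K (e8 c j) = orb K (e8 c' j')"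
  then obtain g where g: "g \<in> Nc K" "e8 c' j' = g ` e8 c j" unfolding orb_iff by blast
  then obtain s t b where sb: "g = gf s t b" "b \<in> Lam" "PP K s t" using Nc_elim by blast
  define J where "J = (if s then 2 * t - j - 2 else j + 2 * t)"
  have "e8 (lin s t c + b) J = e8 c' j'" using g(2) unfolding sb(1) gf_e8 J_def by simp
  then have "j' mod 12 = J mod 12 \<or> j' mod 12 = (J + 6) mod 12" by (rule e8_eq)
  then show "R8 K j j'"
  proof
    assume "j' mod 12 = J mod 12"
    then show ?thesis unfolding R8_def J_def using sb(3) by blast
  next
    assume h: "j' mod 12 = (J + 6) mod 12"
    have "J + 6 = (if s then 2 * (t + 3) - j - 2 else j + 2 * (t + 3))" unfolding J_def by simp
    then show ?thesis unfolding R8_def using h PP_plus3[OF T sb(3)] by metis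
  qed
next
  assume "R8 K j j'"
  then obtain s t where st: "PP K s t" "j' mod 12 = (if s then 2 * t - j - 2 else j + 2 * t) mod 12"
    unfolding R8_def by blast
  define g where "g = gf s t (c' - lin s t c)"
  have gN: "g \<in> Nc K" unfolding g_def by (rule Nc_gf[OF Lam_diff[OF c(2) lin_Lam[OF c(1)]] st(1)])
  have "g ` e8 c j = e8 c' (if s then 2 * t - j - 2 else j + 2 * t)" unfolding g_def gf_e8 by simp
  also have "\<dots> = e8 c' j'" by (rule e8_cong) (use st(2) in simp)
  finally show "orb K (e8 c j) = orb K (e8 c' j')" unfolding orb_iff using gN by blast
qed

lemma K2:
  assumes T: "translation_lattice_group G K" and c: "c \<in> Lam" "c' \<in> Lam"
  shows "(orb K (es c r) = orb K (es c' r')) = RS K r r'"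
proof
  assume "orb K (es c r) = orb K (es c' r')"
  then obtain g where g: "g \<in> Nc K" "es c' r' = g ` es c r" unfolding orb_iff by blast
  then obtain s t b where sb: "g = gf s t b" "b \<in> Lam" "PP K s t" using Nc_elim by blast
  define J where "J = (if s then t - r else r + t)"
  have "es (lin s t c + b) J = es c' r'" using g(2) unfolding sb(1) gf_es J_def by (simp add: add.commute)
  then have "r' mod 6 = J mod 6 \<or> r' mod 6 = (J + 3) mod 6" by (rule es_eq)
  then show "RS K r r'"
  proof
    assume "r' mod 6 = J mod 6"
    then show ?thesis unfolding RS_def J_def using sb(3) by blast
  next
    assume h: "r' mod 6 = (J + 3) mod 6"
    have "J + 3 = (if s then (t + 3) - r else r + (t + 3))" unfolding J_def by simp
    then show ?thesis unfolding RS_def using h PP_plus3[OF T sb(3)] by metis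
  qed
next
  assume "RS K r r'"
  then obtain s t where st: "PP K s t" "r' mod 6 = (if s then t - r else r + t) mod 6"
    unfolding RS_def by blast
  define g where "g = gf s t (c' - lin s t c)"
  have gN: "g \<in> Nc K" unfolding g_def by (rule Nc_gf[OF Lam_diff[OF c(2) lin_Lam[OF c(1)]] st(1)])
  have "g ` es c r = es c' (if s then t - r else r + t)" unfolding g_def gf_es by (simp add: add.commute)
  also have "\<dots> = es c' r'" by (rule es_cong) (use st(2) in simp)
  finally show "orb K (es c r) = orb K (es c' r')" unfolding orb_iff using gN by blast
qed

lemma modE: "(a::int) mod n = b mod n \<Longrightarrow> \<exists>k. a = b + n * k" using mod_ex by blast
lemma modI: "(a::int) = b + n * k \<Longrightarrow> a mod n = b mod n" using mod_ex by blast

lemma Rtri: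
  assumes T: "translation_lattice_group G K"
  shows "R8 K (2 * m) (2 * m') = RS K (m + 2) (m' + 2)"
proof
  assume "R8 K (2 * m) (2 * m')"
  then obtain s t where st: "PP K s t"
    "(2 * m') mod 12 = (if s then 2 * t - 2 * m - 2 else 2 * m + 2 * t) mod 12"
    unfolding R8_def by blast
  show "RS K (m + 2) (m' + 2)"
  proof (cases s)
    case True
    have "(2 * m') mod 12 = (2 * t - 2 * m - 2) mod 12" using st(2) unfolding if_P[OF True] .
    from modE[OF this] obtain k where "2 * m' = (2 * t - 2 * m - 2) + 12 * k" by blast
    then have "m' + 2 = ((t + 3) - (m + 2)) + 6 * k" by linarith
    then have "(m' + 2) mod 6 = ((t + 3) - (m + 2)) mod 6" by (rule modI)
    then have "(m' + 2) mod 6 = (if s then (t + 3) - (m + 2) else (m + 2) + (t + 3)) mod 6" using True by simp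
    then show ?thesis unfolding RS_def using PP_plus3[OF T st(1)] by blast
  next
    case False
    have "(2 * m') mod 12 = (2 * m + 2 * t) mod 12" using st(2) unfolding if_not_P[OF False] .
    from modE[OF this] obtain k where "2 * m' = (2 * m + 2 * t) + 12 * k" by blast
    then have "m' + 2 = ((m + 2) + t) + 6 * k" by linarith
    then have "(m' + 2) mod 6 = ((m + 2) + t) mod 6" by (rule modI)
    then have "(m' + 2) mod 6 = (if s then (t) - (m + 2) else (m + 2) + (t)) mod 6" using False by simp
    then show ?thesis unfolding RS_def using st(1) by blast
  qed
next
  assume "RS K (m + 2) (m' + 2)"
  then obtain s t where st: "PP K s t"
    "(m' + 2) mod 6 = (if s then t - (m + 2) else (m + 2) + t) mod 6"
    unfolding RS_def by blast
  show "R8 K (2 * m) (2 * m')"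
  proof (cases s)
    case True
    have "(m' + 2) mod 6 = (t - (m + 2)) mod 6" using st(2) unfolding if_P[OF True] .
    from modE[OF this] obtain k where "m' + 2 = (t - (m + 2)) + 6 * k" by blast
    then have "2 * m' = 2 * t - 2 * m - 8 + 12 * k" by linarith
    then have "2 * m' = (2 * (t - 3) - 2 * m - 2) + 12 * k" by (simp add: algebra_simps)
    then have "(2 * m') mod 12 = (2 * (t - 3) - 2 * m - 2) mod 12" by (rule modI)
    then have "(2 * m') mod 12 = (if s then 2 * (t - 3) - (2 * m) - 2 else (2 * m) + 2 * (t - 3)) mod 12" using True by simp
    then show ?thesis unfolding R8_def using PP_minus3[OF T st(1)] by blast
  next
    case False
    have "(m' + 2) mod 6 = ((m + 2) + t) mod 6" using st(2) unfolding if_not_P[OF False] .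
    from modE[OF this] obtain k where "m' + 2 = ((m + 2) + t) + 6 * k" by blast
    then have "2 * m' = (2 * m + 2 * t) + 12 * k" by linarith
    then have "(2 * m') mod 12 = (2 * m + 2 * t) mod 12" by (rule modI)
    then have "(2 * m') mod 12 = (if s then 2 * (t) - (2 * m) - 2 else (2 * m) + 2 * (t)) mod 12" using False by simp
    then show ?thesis unfolding R8_def using st(1) by blast
  qed
qed

lemma R12:
  shows "R8 K (2 * m + 1) (2 * m' + 1) = RS K (m + 1) (m' + 1)"
proof
  assume "R8 K (2 * m + 1) (2 * m' + 1)"
  then obtain s t where st: "PP K s t"
    "(2 * m' + 1) mod 12 = (if s then 2 * t - (2 * m + 1) - 2 else (2 * m + 1) + 2 * t) mod 12"
    unfolding R8_def by blast
  show "RS K (m + 1) (m' + 1)"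
  proof (cases s)
    case True
    have "(2 * m' + 1) mod 12 = (2 * t - (2 * m + 1) - 2) mod 12" using st(2) unfolding if_P[OF True] .
    from modE[OF this] obtain k where "2 * m' + 1 = (2 * t - (2 * m + 1) - 2) + 12 * k" by blast
    then have "m' + 1 = (t - (m + 1)) + 6 * k" by linarith
    then have "(m' + 1) mod 6 = (t - (m + 1)) mod 6" by (rule modI)
    then have "(m' + 1) mod 6 = (if s then (t) - (m + 1) else (m + 1) + (t)) mod 6" using True by simp
    then show ?thesis unfolding RS_def using st(1) by blast
  next
    case False
    have "(2 * m' + 1) mod 12 = ((2 * m + 1) + 2 * t) mod 12" using st(2) unfolding if_not_P[OF False] .
    from modE[OF this] obtain k where "2 * m' + 1 = ((2 * m + 1) + 2 * t) + 12 * k" by blast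
    then have "m' + 1 = ((m + 1) + t) + 6 * k" by linarith
    then have "(m' + 1) mod 6 = ((m + 1) + t) mod 6" by (rule modI)
    then have "(m' + 1) mod 6 = (if s then (t) - (m + 1) else (m + 1) + (t)) mod 6" using False by simp
    then show ?thesis unfolding RS_def using st(1) by blast
  qed
next
  assume "RS K (m + 1) (m' + 1)"
  then obtain s t where st: "PP K s t"
    "(m' + 1) mod 6 = (if s then t - (m + 1) else (m + 1) + t) mod 6"
    unfolding RS_def by blast
  show "R8 K (2 * m + 1) (2 * m' + 1)"
  proof (cases s)
    case True
    have "(m' + 1) mod 6 = (t - (m + 1)) mod 6" using st(2) unfolding if_P[OF True] .
    from modE[OF this] obtain k where "m' + 1 = (t - (m + 1)) + 6 * k" by blast
    then have "2 * m' + 1 = (2 * t - (2 * m + 1) - 2) + 12 * k" by linarith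
    then have "(2 * m' + 1) mod 12 = (2 * t - (2 * m + 1) - 2) mod 12" by (rule modI)
    then have "(2 * m' + 1) mod 12 = (if s then 2 * (t) - (2 * m + 1) - 2 else (2 * m + 1) + 2 * (t)) mod 12" using True by simp
    then show ?thesis unfolding R8_def using st(1) by blast
  next
    case False
    have "(m' + 1) mod 6 = ((m + 1) + t) mod 6" using st(2) unfolding if_not_P[OF False] .
    from modE[OF this] obtain k where "m' + 1 = ((m + 1) + t) + 6 * k" by blast
    then have "2 * m' + 1 = ((2 * m + 1) + 2 * t) + 12 * k" by linarith
    then have "(2 * m' + 1) mod 12 = ((2 * m + 1) + 2 * t) mod 12" by (rule modI)
    then have "(2 * m' + 1) mod 12 = (if s then 2 * (t) - (2 * m + 1) - 2 else (2 * m + 1) + 2 * (t)) mod 12" using False by simp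
    then show ?thesis unfolding R8_def using st(1) by blast
  qed
qed

lemma Rpar: "\<not> R8 K (2 * m) (2 * m' + 1)"
proof
  assume "R8 K (2 * m) (2 * m' + 1)"
  then obtain s t where st:
    "(2 * m' + 1) mod 12 = (if s then 2 * t - 2 * m - 2 else 2 * m + 2 * t) mod 12"
    unfolding R8_def by blast
  show False
  proof (cases s)
    case True
    have "(2 * m' + 1) mod 12 = (2 * t - 2 * m - 2) mod 12" using st unfolding if_P[OF True] .
    from modE[OF this] obtain k where "2 * m' + 1 = (2 * t - 2 * m - 2) + 12 * k" by blast
    then have "1 = 2 * t - 2 * m - 2 + 12 * k - 2 * m'" by linarith
    then have "1 = 2 * (t - m - 1 + 6 * k - m')" by (simp add: algebra_simps)
    then have "even (1::int)" by (metis dvd_triv_left)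
    then show False by simp
  next
    case False
    have "(2 * m' + 1) mod 12 = (2 * m + 2 * t) mod 12" using st unfolding if_not_P[OF False] .
    from modE[OF this] obtain k where "2 * m' + 1 = (2 * m + 2 * t) + 12 * k" by blast
    then have "1 = 2 * m + 2 * t + 12 * k - 2 * m'" by linarith
    then have "1 = 2 * (m + t + 6 * k - m')" by (simp add: algebra_simps)
    then have "even (1::int)" by (metis dvd_triv_left)
    then show False by simp
  qed
qed

lemma bij_quot:
  assumes "\<forall>i\<in>I. \<forall>i'\<in>I. (a i = a i') = (b i = b i')"
  shows "bij_betw (\<lambda>x. b (inv_into I a x)) (a ` I) (b ` I)"
proof -
  have h: "b (inv_into I a (a i)) = b i" if "i \<in> I" for i
  proof -
    have "inv_into I a (a i) \<in> I" using that by (rule inv_into_into[OF imageI])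
    moreover have "a (inv_into I a (a i)) = a i" using that by (simp add: f_inv_into_f)
    ultimately show ?thesis using assms that by blast
  qed
  show ?thesis unfolding bij_betw_def
  proof
    show "inj_on (\<lambda>x. b (inv_into I a x)) (a ` I)"
    proof (rule inj_onI)
      fix x y assume "x \<in> a ` I" "y \<in> a ` I" "b (inv_into I a x) = b (inv_into I a y)"
      then obtain i j where ij: "i \<in> I" "j \<in> I" "x = a i" "y = a j"
        "b (inv_into I a x) = b (inv_into I a y)" by blast
      then have "b i = b j" using h by metis
      then show "x = y" using assms ij by blast
    qed
    show "(\<lambda>x. b (inv_into I a x)) ` a ` I = b ` I"
      using h by (auto simp: image_image)
  qed
qed

lemma card2:
  assumes "A \<inter> B = {}" "bij_betw f A C" "bij_betw g B C"
  shows "card (A \<union> B) = 2 * card C"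
proof (cases "finite C")
  case True
  then have "finite A" "finite B" using assms bij_betw_finite by blast+
  moreover have "card A = card C" "card B = card C" using assms bij_betw_same_card by blast+
  moreover have "card (A \<union> B) = card A + card B" by (rule card_Un_disjoint) fact+
  ultimately show ?thesis by simp
next
  case False
  then have "infinite A" using assms bij_betw_finite by blast
  then have "infinite (A \<union> B)" by simp
  then show ?thesis using False by simp
qed

theorem lemma3p3:
  fixes K8 :: "(complex \<Rightarrow> complex) set" and m8 :: nat
  assumes "translation_lattice_group Aut8 K8"
    and "m8 > 0"
  shows "num_edge_orbits_quotient AutS EdgesS K8 = m8 \<longleftrightarrow>
         num_edge_orbits_quotient Aut8 Edges8 K8 = 2 * m8"
proof -
  note T = assms(1)
  have N8: "normaliser Aut8 K8 = Nc K8" unfolding Aut8_eq by (rule normaliser_eq[OF T])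
  have NS: "normaliser AutS K8 = Nc K8" unfolding AutS_eq by (rule normaliser_eq[OF T])
  have O8: "edge_orbits Aut8 Edges8 K8 = orb K8 ` Edges8" unfolding edge_orbits_def N8 orb_def ..
  have OS: "edge_orbits AutS EdgesS K8 = orb K8 ` EdgesS" unfolding edge_orbits_def NS orb_def ..
  define I where "I = Lam \<times> (UNIV :: int set)"
  define a1 where "a1 = (\<lambda>(c, m). orb K8 (e8 c (2 * m)))"
  define a2 where "a2 = (\<lambda>(c, m). orb K8 (e8 c (2 * m + 1)))"
  define b1 where "b1 = (\<lambda>(c, m). orb K8 (es c (m + 2)))"
  define b2 where "b2 = (\<lambda>(c, m). orb K8 (es c (m + 1)))"
  have U8: "orb K8 ` Edges8 = a1 ` I \<union> a2 ` I"
  proof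
    show "orb K8 ` Edges8 \<subseteq> a1 ` I \<union> a2 ` I"
    proof
      fix x assume "x \<in> orb K8 ` Edges8"
      then obtain c j where cj: "c \<in> Lam" "x = orb K8 (e8 c j)" unfolding Edges8_eq by blast
      have cI: "(c, j div 2) \<in> I" unfolding I_def using cj(1) by simp
      show "x \<in> a1 ` I \<union> a2 ` I"
      proof (cases "even j")
        case True
        then have "2 * (j div 2) = j" by simp
        then have "x = a1 (c, j div 2)" unfolding a1_def cj(2) by simp
        then show ?thesis using cI by blast
      next
        case False
        then have "2 * (j div 2) + 1 = j" by simp
        then have "x = a2 (c, j div 2)" unfolding a2_def cj(2) by simp
        then show ?thesis using cI by blast
      qed
    qed
    show "a1 ` I \<union> a2 ` I \<subseteq> orb K8 ` Edges8"
    proof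
      fix x assume "x \<in> a1 ` I \<union> a2 ` I"
      then obtain c m where cm: "c \<in> Lam" "x = orb K8 (e8 c (2 * m)) \<or> x = orb K8 (e8 c (2 * m + 1))"
        unfolding I_def a1_def a2_def by auto
      then show "x \<in> orb K8 ` Edges8" unfolding Edges8_eq by blast
    qed
  qed
  have USb: "orb K8 ` EdgesS = b ` I" if bdef: "b = (\<lambda>(c, m). orb K8 (es c (m + n)))" for b and n :: int
  proof
    show "orb K8 ` EdgesS \<subseteq> b ` I"
    proof
      fix x assume "x \<in> orb K8 ` EdgesS"
      then obtain c r where cr: "c \<in> Lam" "x = orb K8 (es c r)" unfolding EdgesS_eq by blast
      have "x = b (c, r - n)" unfolding bdef cr(2) by simp
      moreover have "(c, r - n) \<in> I" unfolding I_def using cr(1) by simp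
      ultimately show "x \<in> b ` I" by blast
    qed
    show "b ` I \<subseteq> orb K8 ` EdgesS"
    proof
      fix x assume "x \<in> b ` I"
      then obtain c m where cm: "c \<in> Lam" "x = orb K8 (es c (m + n))"
        unfolding I_def bdef by auto
      then show "x \<in> orb K8 ` EdgesS" unfolding EdgesS_eq by blast
    qed
  qed
  have US1: "orb K8 ` EdgesS = b1 ` I" by (rule USb[OF b1_def])
  have US2: "orb K8 ` EdgesS = b2 ` I" by (rule USb[OF b2_def])
  have bij1: "bij_betw (\<lambda>x. b1 (inv_into I a1 x)) (a1 ` I) (b1 ` I)"
  proof (rule bij_quot, intro ballI)
    fix i i' assume "i \<in> I" "i' \<in> I"
    then obtain c m c' m' where ii: "i = (c, m)" "i' = (c', m')" "c \<in> Lam" "c' \<in> Lam"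
      unfolding I_def by auto
    have "(a1 i = a1 i') = R8 K8 (2 * m) (2 * m')" unfolding a1_def ii(1,2) using K1[OF T ii(3,4)] by simp
    also have "\<dots> = RS K8 (m + 2) (m' + 2)" by (rule Rtri[OF T])
    also have "\<dots> = (b1 i = b1 i')" unfolding b1_def ii(1,2) using K2[OF T ii(3,4)] by simp
    finally show "(a1 i = a1 i') = (b1 i = b1 i')" .
  qed
  have bij2: "bij_betw (\<lambda>x. b2 (inv_into I a2 x)) (a2 ` I) (b2 ` I)"
  proof (rule bij_quot, intro ballI)
    fix i i' assume "i \<in> I" "i' \<in> I"
    then obtain c m c' m' where ii: "i = (c, m)" "i' = (c', m')" "c \<in> Lam" "c' \<in> Lam"
      unfolding I_def by auto
    have "(a2 i = a2 i') = R8 K8 (2 * m + 1) (2 * m' + 1)" unfolding a2_def ii(1,2) using K1[OF T ii(3,4)] by simp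
    also have "\<dots> = RS K8 (m + 1) (m' + 1)" by (rule R12)
    also have "\<dots> = (b2 i = b2 i')" unfolding b2_def ii(1,2) using K2[OF T ii(3,4)] by simp
    finally show "(a2 i = a2 i') = (b2 i = b2 i')" .
  qed
  have disj: "a1 ` I \<inter> a2 ` I = {}"
  proof (rule ccontr)
    assume "a1 ` I \<inter> a2 ` I \<noteq> {}"
    then obtain c m c' m' where cm: "c \<in> Lam" "c' \<in> Lam" "orb K8 (e8 c (2 * m)) = orb K8 (e8 c' (2 * m' + 1))"
      unfolding I_def a1_def a2_def by auto
    then have "R8 K8 (2 * m) (2 * m' + 1)" using K1[OF T cm(1,2)] by simp
    then show False using Rpar by blast
  qed
  have "card (a1 ` I \<union> a2 ` I) = 2 * card (b1 ` I)"
    by (rule card2[OF disj bij1]) (use bij2 US1 US2 in simp)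
  then have "card (edge_orbits Aut8 Edges8 K8) = 2 * card (edge_orbits AutS EdgesS K8)"
    unfolding O8 OS U8 US1 .
  then show ?thesis unfolding num_edge_orbits_quotient_def by simp
qed

end
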